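(* Let $n\ge 2$ be an integer, $k,c_b>0$, $\rho_0>0$, and let $\lambda_{1,0}\le\cdots\le\lambda_{n,0}$ be real numbers. Consider the system $$\lambda_i'=-\lambda_i^2+\frac{k}{n}(\rho-c_b)\ (i=1,\dots,n),\qquad \rho'=-\rho\lambda,\quad \lambda=\sum_{i=1}^n\lambda_i,\qquad \rho(0)=\rho_0,\ \lambda_i(0)=\lambda_{i,0},$$ and suppose its maximal interval of existence is $[0,t_B)$ with $0<t_B<\infty$. Then $\lim_{t\to t_B^-}\int_0^t\rho(s)\,ds=\infty$.
   Context: Solutions are real-valued and continuously differentiable on $[0,t_B)$. *)

theory Defs
  imports "HOL-Analysis.Analysis"
begin

text \<open>A (real-valued, differentiable) solution of the system on [0,T):
  lambda_i' = -lambda_i^2 + (k/n)(rho - c_b)  (i = 0..n-1, i.e. indices 1..n shifted),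
  rho' = -rho * (sum_i lambda_i),  rho(0) = rho0, lambda_i(0) = l0 i.
  Derivatives are one-sided at t = 0 (within [0,T)).\<close>
definition is_solution ::
  "nat \<Rightarrow> real \<Rightarrow> real \<Rightarrow> real \<Rightarrow> (nat \<Rightarrow> real) \<Rightarrow> real
    \<Rightarrow> (nat \<Rightarrow> real \<Rightarrow> real) \<Rightarrow> (real \<Rightarrow> real) \<Rightarrow> bool" where
  "is_solution n k cb rho0 l0 T lam rho \<longleftrightarrow>
     0 < T \<and>
     rho 0 = rho0 \<and> (\<forall>i<n. lam i 0 = l0 i) \<and>
     (\<forall>i<n. \<forall>t\<in>{0..<T}.
        (lam i has_real_derivative (- ((lam i t) ^ 2) + k / real n * (rho t - cb)))
          (at t within {0..<T})) \<and>
     (\<forall>t\<in>{0..<T}.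
        (rho has_real_derivative (- rho t * (\<Sum>i<n. lam i t))) (at t within {0..<T}))"

end

theory Submission
  imports Defs
begin

lemma mono_within:
  fixes g g' :: "real \<Rightarrow> real"
  assumes "a \<le> b" "\<And>x. x \<in> {a..b} \<Longrightarrow> (g has_real_derivative g' x) (at x within {a..b})"
    "\<And>x. x \<in> {a..b} \<Longrightarrow> g' x \<ge> 0"
  shows "g a \<le> g b"
proof -
  obtain x where "x\<in>{a..b}" "g b - g a = g' x * (b - a)"
    using mvt_very_simple[OF assms(1), of g "\<lambda>x h. g' x * h"] assms(2)
    by (auto simp: has_field_derivative_def)
  moreover have "g' x \<ge> 0" using assms(3) \<open>x\<in>{a..b}\<close> .
  ultimately show ?thesis using assms(1) by (metis diff_ge_0_iff_ge mult_nonneg_nonneg)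
qed

lemma picard:
  fixes F :: "'a::banach \<Rightarrow> 'a" and x0 :: 'a
  assumes R: "R > 0" and d: "\<delta> > 0" and K: "K \<ge> 0" and dK: "\<delta> * K \<le> R" and dL: "\<delta> * L < 1"
    and Fb: "\<And>x. x \<in> cball x0 R \<Longrightarrow> norm (F x) \<le> K"
    and FL: "L-lipschitz_on (cball x0 R) F"
  shows "\<exists>X. continuous_on UNIV X \<and> (\<forall>t. X t \<in> cball x0 R) \<and>
     (\<forall>t\<in>{t0..t0+\<delta>}. X t = x0 + integral {t0..t} (\<lambda>s. F (X s)))"
proof -
  define c where "c t = min (t0+\<delta>) (max t0 t)" for t
  have c_in: "c t \<in> {t0..t0+\<delta>}" for t using d by (auto simp: c_def)
  have c_id: "t \<in> {t0..t0+\<delta>} \<Longrightarrow> c t = t" for t by (auto simp: c_def)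
  have c_cont: "continuous_on UNIV c" unfolding c_def by (intro continuous_intros)
  define S where "S = {x :: real \<Rightarrow>\<^sub>C 'a. \<forall>t. apply_bcontfun x t \<in> cball x0 R}"
  have Fc: "continuous_on (cball x0 R) F" using FL lipschitz_on_continuous_on by blast
  have L0: "L \<ge> 0" using FL lipschitz_on_nonneg by blast
  have FX_cont: "continuous_on A (\<lambda>s. F (apply_bcontfun x s))" if "x \<in> S" for x A
    by (rule continuous_on_compose2[OF Fc]) (use that in \<open>auto simp: S_def\<close>)
  have FX_int: "(\<lambda>s. F (apply_bcontfun x s)) integrable_on {a..b}" if "x \<in> S" for x a b
    by (rule integrable_continuous_interval[OF FX_cont[OF that]])
  have FX_bd: "norm (integral {t0..u} (\<lambda>s. F (apply_bcontfun x s))) \<le> K * (u - t0)"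
    if "x \<in> S" "u \<in> {t0..t0+\<delta>}" for x u
  proof -
    have "norm (integral {t0..u} (\<lambda>s. F (apply_bcontfun x s))) \<le> K * Henstock_Kurzweil_Integration.content {t0..u}"
      by (rule has_integral_bound_real[OF K finite.emptyI])
        (use FX_int[OF that(1)] Fb that(1) in \<open>auto simp: S_def\<close>)
    then show ?thesis using that by simp
  qed
  define P where "P x = (\<lambda>t. x0 + integral {t0..c t} (\<lambda>s. F (apply_bcontfun x s)))" for x
  have P_bcont: "P x \<in> bcontfun" if "x \<in> S" for x
  proof (rule bcontfun_normI)
    have "continuous_on {t0..t0+\<delta>} (\<lambda>u. integral {t0..u} (\<lambda>s. F (apply_bcontfun x s)))"
      by (rule indefinite_integral_continuous_1[OF FX_int[OF that]])
    then show "continuous_on UNIV (P x)"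
      unfolding P_def
      by (intro continuous_intros continuous_on_compose2[OF _ c_cont]) (use c_in in auto)
    fix t
    have "norm (P x t) \<le> norm x0 + norm (integral {t0..c t} (\<lambda>s. F (apply_bcontfun x s)))"
      unfolding P_def by (rule norm_triangle_ineq)
    
    also have "\<dots> \<le> norm x0 + K * (c t - t0)" using FX_bd[OF that c_in] by simp
    also have "\<dots> \<le> norm x0 + K * \<delta>" using c_in[of t] K by (simp add: mult_left_mono)
    finally show "norm (P x t) \<le> norm x0 + K * \<delta>" .
  qed
  define Q where "Q x = (if x \<in> S then Bcontfun (P x) else x)" for x
  have QP: "apply_bcontfun (Q x) = P x" if "x \<in> S" for x
    using that P_bcont by (simp add: Q_def Bcontfun_inverse)
  have QS: "Q ` S \<subseteq> S"
  proof
    fix y assume "y \<in> Q ` S"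
    then obtain x where x: "x \<in> S" "y = Q x" by auto
    show "y \<in> S" unfolding S_def
    proof (intro CollectI allI)
      fix t
      have "dist x0 (apply_bcontfun y t) = norm (integral {t0..c t} (\<lambda>s. F (apply_bcontfun x s)))"
        using x by (simp add: QP P_def dist_norm)
      also have "\<dots> \<le> K * (c t - t0)" using FX_bd[OF x(1) c_in] .
      also have "\<dots> \<le> K * \<delta>" using c_in[of t] K by (intro mult_left_mono) auto
      finally show "apply_bcontfun y t \<in> cball x0 R" using dK by (simp add: mult.commute)
    qed
  qed
  have Scl: "closed S"
  proof -
    have "S = PiC UNIV (\<lambda>_. cball x0 R)"
      by (auto simp: S_def mem_PiC_iff Pi_iff)
    then show ?thesis by (auto intro!: closed_PiC)
  qed
  have Scomp: "complete S" using Scl by (simp add: complete_eq_closed)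
  have Sne: "S \<noteq> {}"
  proof -
    have "const_bcontfun x0 \<in> S" using R by (simp add: S_def)
    then show ?thesis by blast
  qed
  have contr: "dist (Q x) (Q y) \<le> (\<delta> * L) * dist x y" if "x \<in> S" "y \<in> S" for x y
  proof (rule dist_bound)
    fix t
    have "dist (Q x t) (Q y t) = norm (integral {t0..c t} (\<lambda>s. F (apply_bcontfun x s))
         - integral {t0..c t} (\<lambda>s. F (apply_bcontfun y s)))"
      using that by (simp add: QP P_def dist_norm)
    also have "\<dots> = norm (integral {t0..c t} (\<lambda>s. F (apply_bcontfun x s) - F (apply_bcontfun y s)))"
      by (simp add: Henstock_Kurzweil_Integration.integral_diff FX_int that)
    also have "\<dots> \<le> (L * dist x y) * Henstock_Kurzweil_Integration.content {t0..c t}"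
    proof (rule has_integral_bound_real[OF _ finite.emptyI])
      show "0 \<le> L * dist x y" using L0 by simp
      show "((\<lambda>s. F (apply_bcontfun x s) - F (apply_bcontfun y s)) has_integral
         integral {t0..c t} (\<lambda>s. F (apply_bcontfun x s) - F (apply_bcontfun y s))) {t0..c t}"
        by (intro integrable_integral integrable_diff FX_int that)
      fix s assume "s \<in> {t0..c t} - {}"
      have "norm (F (apply_bcontfun x s) - F (apply_bcontfun y s)) \<le> L * dist (apply_bcontfun x s) (apply_bcontfun y s)"
        using lipschitz_onD[OF FL, of "apply_bcontfun x s" "apply_bcontfun y s"] that
        by (auto simp: S_def dist_norm)
      also have "\<dots> \<le> L * dist x y" using L0 dist_bounded by (intro mult_left_mono) auto
      finally show "norm (F (apply_bcontfun x s) - F (apply_bcontfun y s)) \<le> L * dist x y" .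
    qed
    also have "\<dots> \<le> (L * dist x y) * \<delta>"
      using c_in[of t] L0 by (intro mult_left_mono) auto
    finally show "dist (Q x t) (Q y t) \<le> (\<delta> * L) * dist x y" by (simp add: algebra_simps)
  qed
  obtain X where X: "X \<in> S" "Q X = X"
    using Banach_fix[OF Scomp Sne _ dL QS contr] d L0 by auto
  show ?thesis
  proof (intro exI[of _ "apply_bcontfun X"] conjI ballI allI)
    show "continuous_on UNIV (apply_bcontfun X)" by simp
    show "apply_bcontfun X t \<in> cball x0 R" for t using X by (auto simp: S_def)
    fix t assume t: "t \<in> {t0..t0+\<delta>}"
    have "apply_bcontfun X t = apply_bcontfun (Q X) t" using X by simp
    also have "\<dots> = x0 + integral {t0..t} (\<lambda>s. F (apply_bcontfun X s))"
      using QP[OF X(1)] t by (simp add: P_def c_id)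
    finally show "apply_bcontfun X t = x0 + integral {t0..t} (\<lambda>s. F (apply_bcontfun X s))" .
  qed
qed

instance bcontfun :: (metric_space, banach) banach ..

definition hat :: "real \<Rightarrow> real" where "hat s = max 0 (1 - \<bar>s\<bar>)"

definition mk :: "nat \<Rightarrow> (nat \<Rightarrow> real) \<Rightarrow> real \<Rightarrow> real" where
  "mk n c = (\<lambda>s. \<Sum>j\<le>n. c j * hat (s - real j))"

lemma hat_bounds: "0 \<le> hat s" "hat s \<le> 1" by (auto simp: hat_def)

lemma mk_abs: "\<bar>mk n c s\<bar> \<le> (\<Sum>j\<le>n. \<bar>c j\<bar>)"
proof -
  have "\<bar>mk n c s\<bar> \<le> (\<Sum>j\<le>n. \<bar>c j * hat (s - real j)\<bar>)" unfolding mk_def by (rule sum_abs)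
  also have "\<dots> \<le> (\<Sum>j\<le>n. \<bar>c j\<bar>)"
  proof (rule sum_mono)
    fix j
    have "\<bar>c j * hat (s - real j)\<bar> = \<bar>c j\<bar> * hat (s - real j)"
      using hat_bounds(1) by (simp add: abs_mult)
    also have "\<dots> \<le> \<bar>c j\<bar> * 1" using hat_bounds(2) by (intro mult_left_mono) auto
    finally show "\<bar>c j * hat (s - real j)\<bar> \<le> \<bar>c j\<bar>" by simp
  qed
  finally show ?thesis .
qed

lemma mk_b: "mk n c \<in> bcontfun"
proof (rule bcontfun_normI)
  show "continuous_on UNIV (mk n c)" unfolding mk_def hat_def by (intro continuous_intros)
  show "norm (mk n c s) \<le> (\<Sum>j\<le>n. \<bar>c j\<bar>)" for s using mk_abs by simp
qed

lemma mk_at: assumes "i \<le> n" shows "mk n c (real i) = c i"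
proof -
  have "mk n c (real i) = (\<Sum>j\<le>n. if j = i then c i else 0)"
    unfolding mk_def
  proof (rule sum.cong[OF refl])
    fix j
    show "c j * hat (real i - real j) = (if j = i then c i else 0)"
    proof (cases "j = i")
      case False
      then have "\<bar>real i - real j\<bar> \<ge> 1" by linarith
      then show ?thesis using False by (simp add: hat_def)
    qed (simp add: hat_def)
  qed
  also have "\<dots> = c i" using assms by simp
  finally show ?thesis .
qed

lemma mk_diff: "mk n c s - mk n d s = mk n (\<lambda>j. c j - d j) s"
  unfolding mk_def by (simp add: sum_subtractf algebra_simps)

lemma eval_bl: "bounded_linear (\<lambda>f::real \<Rightarrow>\<^sub>C real. apply_bcontfun f j)"
  by (rule bounded_linear_intro[where K=1]) (auto, metis norm_bounded real_norm_def)

lemma local_exist: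
  fixes a :: "nat \<Rightarrow> real" and r k cb ta :: real and n :: nat
  shows "\<exists>\<delta>>0. \<exists>y :: nat \<Rightarrow> real \<Rightarrow> real. (\<forall>j. continuous_on {ta..ta+\<delta>} (y j)) \<and>
     (\<forall>i<n. \<forall>t\<in>{ta..ta+\<delta>}. y i t = a i + integral {ta..t} (\<lambda>s. -((y i s)^2) + k/n*(y n s - cb))) \<and>
     (\<forall>t\<in>{ta..ta+\<delta>}. y n t = r + integral {ta..t} (\<lambda>s. - y n s * (\<Sum>i<n. y i s)))"
proof -
  define vf where "vf x = (\<lambda>j. if j < n then -((x j)^2) + k/n*(x n - cb)
      else - x n * (\<Sum>i<n. x i))" for x :: "nat \<Rightarrow> real"
  define cx where "cx x = (\<lambda>j. apply_bcontfun x (real j))" for x :: "real \<Rightarrow>\<^sub>C real"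
  define V where "V x = Bcontfun (mk n (vf (cx x)))" for x :: "real \<Rightarrow>\<^sub>C real"
  have V_app: "apply_bcontfun (V x) s = mk n (vf (cx x)) s" for x s
    using mk_b by (simp add: V_def Bcontfun_inverse)
  define x0f where "x0f = (\<lambda>j. if j < n then a j else r)"
  define x0 where "x0 = Bcontfun (mk n x0f)"
  have x0_app: "apply_bcontfun x0 s = mk n x0f s" for s using mk_b by (simp add: x0_def Bcontfun_inverse)
  define P where "P = norm x0 + 1"
  have P0: "P \<ge> 1" by (simp add: P_def)
  have P0': "P \<ge> 0" using P0 by simp
  have xP: "\<bar>cx x j\<bar> \<le> P" if "x \<in> cball x0 1" for x j
  proof -
    have "norm x \<le> norm x0 + 1" using that norm_triangle_sub[of x x0]
      by (auto simp: dist_norm norm_minus_commute)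
    then show ?thesis using norm_bounded[of x "real j"] by (simp add: P_def cx_def)
  qed
  have sumP: "\<bar>\<Sum>i<n. cx x i\<bar> \<le> n * P" if "x \<in> cball x0 1" for x
  proof -
    have "\<bar>\<Sum>i<n. cx x i\<bar> \<le> (\<Sum>i<n. \<bar>cx x i\<bar>)" by (rule sum_abs)
    also have "\<dots> \<le> (\<Sum>i<n. P)" by (intro sum_mono xP that)
    finally show ?thesis by simp
  qed
  define \<kappa> where "\<kappa> = \<bar>k / real n\<bar>"
  have k0: "\<kappa> \<ge> 0" by (simp add: \<kappa>_def)
  define K1 where "K1 = P^2 + \<kappa> * (P + \<bar>cb\<bar>) + n * P^2"
  define L1 where "L1 = 2*P + \<kappa> + 2 * n * P"
  define K where "K = (n+1) * K1"
  define L where "L = (n+1) * L1"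
  have K10: "K1 \<ge> 0" unfolding K1_def using k0 P0 by (intro add_nonneg_nonneg mult_nonneg_nonneg) auto
  have L10: "L1 \<ge> 0" unfolding L1_def using k0 P0 by (intro add_nonneg_nonneg mult_nonneg_nonneg) auto
  have K0: "K \<ge> 0" using K10 by (simp add: K_def)
  have L0: "L \<ge> 0" using L10 by (simp add: L_def)
  have vfb: "\<bar>vf (cx x) j\<bar> \<le> K1" if x: "x \<in> cball x0 1" for x j
  proof (cases "j < n")
    case True
    let ?xj = "cx x j" and ?xn = "cx x n"
    have "\<bar>-(?xj^2) + k/n*(?xn - cb)\<bar> \<le> \<bar>?xj^2\<bar> + \<bar>k/n*(?xn - cb)\<bar>"
      by (rule order_trans[OF abs_triangle_ineq]) simp
    also have "\<bar>k/n*(?xn - cb)\<bar> = \<kappa> * \<bar>?xn - cb\<bar>" by (simp add: \<kappa>_def abs_mult)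
    also have "\<bar>?xn - cb\<bar> \<le> \<bar>?xn\<bar> + \<bar>cb\<bar>" by (rule abs_triangle_ineq4)
    also have "\<bar>?xj^2\<bar> = \<bar>?xj\<bar>^2" by simp
    also have "\<bar>?xj\<bar>^2 \<le> P^2" using xP[OF x, of j] by (intro power_mono) auto
    finally have "\<bar>-(?xj^2) + k/n*(?xn - cb)\<bar> \<le> P^2 + \<kappa> * (\<bar>?xn\<bar> + \<bar>cb\<bar>)"
      using k0 by (simp add: mult_left_mono)
    also have "\<dots> \<le> P^2 + \<kappa> * (P + \<bar>cb\<bar>)"
      using xP[OF x, of n] k0 by (simp add: mult_left_mono)
    also have "\<dots> \<le> K1" using P0 by (simp add: K1_def)
    finally show ?thesis using True by (simp add: vf_def)
  next
    case False
    have "\<bar>- cx x n * (\<Sum>i<n. cx x i)\<bar> \<le> P * (n * P)"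
      unfolding abs_minus abs_mult
      using xP[OF x, of n] sumP[OF x] P0' by (intro mult_mono) auto
    also have "\<dots> \<le> K1" using P0 k0 by (simp add: K1_def power2_eq_square)
    finally show ?thesis using False by (simp add: vf_def)
  qed
  have Vb: "norm (V x) \<le> K" if x: "x \<in> cball x0 1" for x
  proof (rule norm_bound)
    fix s
    have "\<bar>mk n (vf (cx x)) s\<bar> \<le> (\<Sum>j\<le>n. \<bar>vf (cx x) j\<bar>)" by (rule mk_abs)
    also have "\<dots> \<le> (\<Sum>j\<le>n. K1)" by (intro sum_mono vfb x)
    finally show "norm (apply_bcontfun (V x) s) \<le> K" by (simp add: V_app K_def)
  qed
  have vfL: "\<bar>vf (cx x) j - vf (cx y) j\<bar> \<le> L1 * dist x y"
    if x: "x \<in> cball x0 1" and y: "y \<in> cball x0 1" for x y j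
  proof -
    define d where "d = dist x y"
    have dj: "\<bar>cx x j - cx y j\<bar> \<le> d" for j
      using dist_bounded[of x "real j" y] by (simp add: d_def dist_real_def cx_def)
    have d0: "d \<ge> 0" by (simp add: d_def)
    have "\<bar>vf (cx x) j - vf (cx y) j\<bar> \<le> L1 * d"
    proof (cases "j < n")
      case True
      let ?xj = "cx x j" and ?yj = "cx y j" and ?xn = "cx x n" and ?yn = "cx y n"
      have "\<bar>(-(?xj^2) + k/n*(?xn - cb)) - (-(?yj^2) + k/n*(?yn - cb))\<bar>
          = \<bar>-((?xj + ?yj) * (?xj - ?yj)) + k/n*(?xn - ?yn)\<bar>"
        by (simp add: algebra_simps power2_eq_square)
      also have "\<dots> \<le> \<bar>?xj + ?yj\<bar> * \<bar>?xj - ?yj\<bar> + \<kappa> * \<bar>?xn - ?yn\<bar>"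
        unfolding \<kappa>_def
        by (rule order_trans[OF abs_triangle_ineq]) (simp add: abs_mult)
      also have "\<dots> \<le> (2*P) * d + \<kappa> * d"
      proof (rule add_mono)
        have "\<bar>?xj + ?yj\<bar> \<le> 2*P" using xP[OF x, of j] xP[OF y, of j] by linarith
        then show "\<bar>?xj + ?yj\<bar> * \<bar>?xj - ?yj\<bar> \<le> (2*P) * d"
          using dj[of j] by (intro mult_mono) auto
        show "\<kappa> * \<bar>?xn - ?yn\<bar> \<le> \<kappa> * d" using dj[of n] k0 by (rule mult_left_mono)
      qed
      also have "\<dots> \<le> L1 * d"
      proof -
        have "L1 * d = (2*P) * d + \<kappa> * d + (2*n*P) * d" by (simp add: L1_def algebra_simps)
        moreover have "(2*n*P) * d \<ge> 0" using P0 d0 by simp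
        ultimately show ?thesis by linarith
      qed
      finally show ?thesis using True by (simp add: vf_def)
    next
      case False
      let ?xn = "cx x n" and ?yn = "cx y n"
        and ?sx = "\<Sum>i<n. cx x i" and ?sy = "\<Sum>i<n. cx y i"
      have sd: "\<bar>?sx - ?sy\<bar> \<le> n * d"
      proof -
        have "\<bar>?sx - ?sy\<bar> = \<bar>\<Sum>i<n. cx x i - cx y i\<bar>"
          by (simp add: sum_subtractf)
        also have "\<dots> \<le> (\<Sum>i<n. \<bar>cx x i - cx y i\<bar>)" by (rule sum_abs)
        also have "\<dots> \<le> (\<Sum>i<n. d)" by (intro sum_mono dj)
        finally show ?thesis by simp
      qed
      have "\<bar>(- ?xn * ?sx) - (- ?yn * ?sy)\<bar> = \<bar>(?yn - ?xn) * ?sy + ?xn * (?sy - ?sx)\<bar>"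
        by (simp add: algebra_simps)
      also have "\<dots> \<le> \<bar>?yn - ?xn\<bar> * \<bar>?sy\<bar> + \<bar>?xn\<bar> * \<bar>?sy - ?sx\<bar>"
        by (rule order_trans[OF abs_triangle_ineq]) (simp add: abs_mult)
      also have "\<dots> \<le> d * (n * P) + P * (n * d)"
      proof (rule add_mono)
        show "\<bar>?yn - ?xn\<bar> * \<bar>?sy\<bar> \<le> d * (n * P)"
          using sumP[OF y] dj[of n] d0 by (intro mult_mono) (auto simp: abs_minus_commute)
        show "\<bar>?xn\<bar> * \<bar>?sy - ?sx\<bar> \<le> P * (n * d)"
          using xP[OF x, of n] sd P0 by (intro mult_mono) (auto simp: abs_minus_commute)
      qed
      also have "\<dots> \<le> L1 * d"
      proof -
        have "L1 * d = (2*P) * d + \<kappa> * d + (2*n*P) * d" by (simp add: L1_def algebra_simps)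
        moreover have "d * (n * P) + P * (n * d) = (2*n*P) * d" by (simp add: algebra_simps)
        moreover have "(2*P) * d + \<kappa> * d \<ge> 0" using P0 d0 k0 by simp
        ultimately show ?thesis by linarith
      qed
      finally show ?thesis using False by (simp add: vf_def)
    qed
    then show ?thesis by (simp add: d_def)
  qed
  have VL: "L-lipschitz_on (cball x0 1) V"
  proof (rule lipschitz_onI[OF _ L0])
    fix x y assume x: "x \<in> cball x0 1" and y: "y \<in> cball x0 1"
    have "norm (V x - V y) \<le> L * dist x y"
    proof (rule norm_bound)
      fix s
      have "\<bar>mk n (vf (cx x)) s - mk n (vf (cx y)) s\<bar>
          = \<bar>mk n (\<lambda>j. vf (cx x) j - vf (cx y) j) s\<bar>" by (simp add: mk_diff)
      also have "\<dots> \<le> (\<Sum>j\<le>n. \<bar>vf (cx x) j - vf (cx y) j\<bar>)" by (rule mk_abs)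
      also have "\<dots> \<le> (\<Sum>j\<le>n. L1 * dist x y)" by (intro sum_mono vfL x y)
      finally show "norm (apply_bcontfun (V x - V y) s) \<le> L * dist x y"
        by (simp add: V_app L_def)
    qed
    then show "dist (V x) (V y) \<le> L * dist x y" by (simp add: dist_norm)
  qed
  define \<delta> where "\<delta> = 1 / (K + L + 1)"
  have d0: "\<delta> > 0" using K0 L0 by (simp add: \<delta>_def)
  have dK: "\<delta> * K \<le> 1" using K0 L0 by (simp add: \<delta>_def field_simps)
  have dL: "\<delta> * L < 1" using K0 L0 by (simp add: \<delta>_def field_simps)
  obtain X where Xc: "continuous_on UNIV X" and Xb: "\<forall>t. X t \<in> cball x0 1"
    and Xi: "\<forall>t\<in>{ta..ta+\<delta>}. X t = x0 + integral {ta..t} (\<lambda>s. V (X s))"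
    using picard[OF zero_less_one d0 K0 dK dL Vb VL, of ta] by auto
  define y where "y j t = apply_bcontfun (X t) (real j)" for j t
  have VXc: "continuous_on A (\<lambda>s. V (X s))" for A
    by (rule continuous_on_compose2[OF lipschitz_on_continuous_on[OF VL] continuous_on_subset[OF Xc]])
      (use Xb in auto)
  have yc: "continuous_on A (y j)" for j A
    unfolding y_def
    by (rule continuous_on_compose2[OF linear_continuous_on[OF eval_bl] continuous_on_subset[OF Xc]]) auto
  have yi: "y j t = x0f j + integral {ta..t} (\<lambda>s. vf (\<lambda>i. y i s) j)"
    if t: "t \<in> {ta..ta+\<delta>}" and j: "j \<le> n" for j t
  proof -
    have int: "(\<lambda>s. V (X s)) integrable_on {ta..t}"
      by (rule integrable_continuous_interval[OF VXc])
    have "y j t = x0f j + apply_bcontfun (integral {ta..t} (\<lambda>s. V (X s))) (real j)"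
      using Xi t j by (simp add: y_def x0_app mk_at)
    also have "apply_bcontfun (integral {ta..t} (\<lambda>s. V (X s))) (real j)
        = integral {ta..t} ((\<lambda>f. apply_bcontfun f (real j)) \<circ> (\<lambda>s. V (X s)))"
      by (rule integral_linear[OF int eval_bl, symmetric])
    also have "\<dots> = integral {ta..t} (\<lambda>s. vf (\<lambda>i. y i s) j)"
      using j by (simp add: o_def V_app y_def mk_at cx_def)
    finally show ?thesis .
  qed
  show ?thesis
  proof (intro exI[of _ \<delta>] exI[of _ y] conjI d0 allI impI ballI)
    show "continuous_on {ta..ta+\<delta>} (y j)" for j by (rule yc)
    show "y i t = a i + integral {ta..t} (\<lambda>s. -((y i s)^2) + k/n*(y n s - cb))"
      if "i < n" "t \<in> {ta..ta+\<delta>}" for i t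
      using yi[OF that(2), of i] that(1) by (simp add: vf_def x0f_def)
    show "y n t = r + integral {ta..t} (\<lambda>s. - y n s * (\<Sum>i<n. y i s))"
      if "t \<in> {ta..ta+\<delta>}" for t
      using yi[OF that, of n] by (simp add: vf_def x0f_def)
  qed
qed

lemma glue:
  fixes g1 g2 G :: "real \<Rightarrow> real" and T1 T2 :: real
  assumes T: "0 < T1" "T1 < T2"
    and c1: "continuous_on {0..T1} g1" and eq: "g1 T1 = g2 T1"
    and Gc: "continuous_on {0..T2} G"
    and d1: "\<And>t. t \<in> {0..<T1} \<Longrightarrow> (g1 has_real_derivative G t) (at t within {0..<T1})"
    and i2: "\<And>t. t \<in> {T1..T2} \<Longrightarrow> g2 t = g2 T1 + integral {T1..t} G"
    and t: "t \<in> {0..<T2}"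
  shows "((\<lambda>t. if t \<le> T1 then g1 t else g2 t) has_real_derivative G t) (at t within {0..<T2})"
proof -
  define h where "h = (\<lambda>t. if t \<le> T1 then g1 t else g2 t)"
  have Gi: "G integrable_on {a..b}" if "0 \<le> a" "b \<le> T2" for a b
    by (rule integrable_continuous_interval[OF continuous_on_subset[OF Gc]]) (use that in auto)
  have lt: "g1 s = g1 0 + integral {0..s} G" if s: "s \<in> {0..<T1}" for s
  proof -
    have "(G has_integral (g1 s - g1 0)) {0..s}"
    proof (rule fundamental_theorem_of_calculus)
      show "0 \<le> s" using s by simp
      fix x assume x: "x \<in> {0..s}"
      have "(g1 has_real_derivative G x) (at x within {0..s})"
        by (rule DERIV_subset[OF d1]) (use x s in auto)
      then show "(g1 has_vector_derivative G x) (at x within {0..s})"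
        by (simp add: has_real_derivative_iff_has_vector_derivative)
    qed
    then show ?thesis by (simp add: integral_unique)
  qed
  have atT1: "g1 T1 = g1 0 + integral {0..T1} G"
  proof (rule ccontr)
    define d where "d s = g1 s - (g1 0 + integral {0..s} G)" for s
    assume "g1 T1 \<noteq> g1 0 + integral {0..T1} G"
    then have nz: "d T1 \<noteq> 0" by (simp add: d_def)
    have "continuous_on {0..T1} (\<lambda>s. integral {0..s} G)"
      by (rule indefinite_integral_continuous_1[OF Gi]) (use T in auto)
    then have dc: "continuous_on {0..T1} d" unfolding d_def by (intro continuous_intros c1)
    obtain e where e: "e > 0" "\<And>s. s \<in> {0..T1} \<Longrightarrow> dist s T1 < e \<Longrightarrow> dist (d s) (d T1) < \<bar>d T1\<bar>"
      using dc[unfolded continuous_on_iff, rule_format, of T1 "\<bar>d T1\<bar>"] nz T by auto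
    define s where "s = max 0 (T1 - e/2)"
    have s: "s \<in> {0..<T1}" "dist s T1 < e" using T e by (auto simp: s_def dist_real_def)
    have "d s = 0" unfolding d_def by (subst lt[OF s(1)]) simp
    then show False using e(2)[OF _ s(2)] s(1) by (simp add: dist_real_def)
  qed
  have rep: "h s = g1 0 + integral {0..s} G" if s: "s \<in> {0..T2}" for s
  proof (cases "s < T1")
    case True
    then have "h s = g1 s" by (simp add: h_def)
    also have "\<dots> = g1 0 + integral {0..s} G" by (rule lt) (use True s in simp)
    finally show ?thesis .
  next
    case False
    show ?thesis
    proof (cases "s = T1")
      case True
      then show ?thesis using atT1 by (simp add: h_def)
    next
      case False2: False
      then have s1: "s \<in> {T1..T2}" "\<not> s \<le> T1" using False s by auto
      have comb: "integral {0..T1} G + integral {T1..s} G = integral {0..s} G"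
      proof (rule Henstock_Kurzweil_Integration.integral_combine)
        show "0 \<le> T1" using T by simp
        show "T1 \<le> s" using s1 by simp
        show "G integrable_on {0..s}" using Gi[of 0 s] s by simp
      qed
      have "h s = g2 T1 + integral {T1..s} G" using i2[OF s1(1)] s1(2) by (simp add: h_def)
      also have "\<dots> = g1 0 + integral {0..s} G" using eq atT1 comb by linarith
      finally show ?thesis .
    qed
  qed
  have "((\<lambda>s. integral {0..s} G) has_real_derivative G t) (at t within {0..T2})"
    by (rule integral_has_real_derivative[OF Gc]) (use t in simp)
  from DERIV_add[OF DERIV_const this]
  have "((\<lambda>s. g1 0 + integral {0..s} G) has_real_derivative G t) (at t within {0..T2})"
    by simp
  then have "((\<lambda>s. g1 0 + integral {0..s} G) has_real_derivative G t) (at t within {0..<T2})"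
    by (rule DERIV_subset) (rule atLeastLessThan_subseteq_atLeastAtMost_iff[THEN iffD2], simp)
  then have "(h has_real_derivative G t) (at t within {0..<T2})"
  proof (rule has_field_derivative_transform_within[OF _ zero_less_one])
    show "t \<in> {0..<T2}" using t .
    fix x assume "x \<in> {0..<T2}"
    then show "g1 0 + integral {0..x} G = h x" using rep[of x] by simp
  qed
  then show ?thesis by (simp add: h_def)
qed

lemma glue_cont:
  fixes g1 g2 :: "real \<Rightarrow> real" and T1 T2 :: real
  assumes c1: "continuous_on {0..T1} g1" and c2: "continuous_on {T1..T2} g2" and eq: "g1 T1 = g2 T1"
  shows "continuous_on {0..T2} (\<lambda>t. if t \<le> T1 then g1 t else g2 t)"
proof -
  have "continuous_on ({0..T1} \<union> {T1..T2}) (\<lambda>t. if t \<le> T1 then g1 t else g2 t)"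
  proof (rule continuous_on_closed_Un)
    show "continuous_on {0..T1} (\<lambda>t. if t \<le> T1 then g1 t else g2 t)"
      by (rule continuous_on_eq[OF c1]) simp
    show "continuous_on {T1..T2} (\<lambda>t. if t \<le> T1 then g1 t else g2 t)"
      by (rule continuous_on_eq[OF c2]) (use eq in \<open>auto simp: not_le\<close>)
  qed simp_all
  then show ?thesis by (rule continuous_on_subset) auto
qed

lemma int_deriv:
  fixes g :: "real \<Rightarrow> real"
  assumes "continuous_on {0..<T} g" "0 \<le> a" "b < T" "t \<in> {a..b}"
  shows "((\<lambda>s. integral {0..s} g) has_real_derivative g t) (at t within {a..b})"
proof -
  have "((\<lambda>s. integral {0..s} g) has_real_derivative g t) (at t within {0..b})"
    by (rule integral_has_real_derivative[OF continuous_on_subset[OF assms(1)]]) (use assms in auto)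
  then show ?thesis by (rule DERIV_subset) (use assms in auto)
qed

lemma lip_from_deriv:
  fixes g g' :: "real \<Rightarrow> real"
  assumes D0: "D \<ge> 0"
    and d: "\<And>t a b. 0 \<le> a \<Longrightarrow> b < T \<Longrightarrow> t \<in> {a..b} \<Longrightarrow> (g has_real_derivative g' t) (at t within {a..b})"
    and bd: "\<And>t. t \<in> {0..<T} \<Longrightarrow> \<bar>g' t\<bar> \<le> D"
  shows "D-lipschitz_on {0..<T} g"
proof (rule lipschitz_onI[OF _ D0])
  have one: "\<bar>g y - g x\<bar> \<le> D * (y - x)" if xy: "x \<in> {0..<T}" "y \<in> {0..<T}" "x \<le> y" for x y
  proof -
    have "D * x - g x \<le> D * y - g y"
    proof (rule mono_within[of x y "\<lambda>s. D * s - g s" "\<lambda>s. D * 1 - g' s"])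
      show "x \<le> y" using xy by simp
      fix s assume s: "s \<in> {x..y}"
      show "((\<lambda>s. D * s - g s) has_real_derivative D * 1 - g' s) (at s within {x..y})"
        by (intro DERIV_diff DERIV_cmult DERIV_ident d) (use xy s in auto)
      have "s \<in> {0..<T}" using xy s by auto
      then have "\<bar>g' s\<bar> \<le> D" by (rule bd)
      then show "0 \<le> D * 1 - g' s" by (simp add: abs_le_iff)
    qed
    moreover have "g x + D * x \<le> g y + D * y"
    proof (rule mono_within[of x y "\<lambda>s. g s + D * s" "\<lambda>s. g' s + D * 1"])
      show "x \<le> y" using xy by simp
      fix s assume s: "s \<in> {x..y}"
      show "((\<lambda>s. g s + D * s) has_real_derivative g' s + D * 1) (at s within {x..y})"
        by (intro DERIV_add DERIV_cmult DERIV_ident d) (use xy s in auto)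
      have "s \<in> {0..<T}" using xy s by auto
      then have "\<bar>g' s\<bar> \<le> D" by (rule bd)
      then show "0 \<le> g' s + D * 1" by (simp add: abs_le_iff)
    qed
    ultimately show ?thesis by (simp add: abs_le_iff algebra_simps)
  qed
  fix x y assume x: "x \<in> {0..<T}" and y: "y \<in> {0..<T}"
  show "dist (g x) (g y) \<le> D * dist x y"
  proof (cases "x \<le> y")
    case True
    then show ?thesis using one[OF x y True] by (simp add: dist_real_def abs_minus_commute)
  next
    case False
    then show ?thesis using one[OF y x] by (simp add: dist_real_def)
  qed
qed

theorem proposition2p5:
  fixes n :: nat and k cb rho0 tB :: real and l0 :: "nat \<Rightarrow> real"
    and lam :: "nat \<Rightarrow> real \<Rightarrow> real" and rho :: "real \<Rightarrow> real"
  assumes "n \<ge> 2" and "k > 0" and "cb > 0" and "rho0 > 0"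
    and "\<And>i j. i \<le> j \<Longrightarrow> j < n \<Longrightarrow> l0 i \<le> l0 j"
    and "0 < tB"
    and sol: "is_solution n k cb rho0 l0 tB lam rho"
    and maximal: "\<And>T lam' rho'. T > tB \<Longrightarrow> is_solution n k cb rho0 l0 T lam' rho' \<Longrightarrow>
         \<not> ((\<forall>t\<in>{0..<tB}. rho' t = rho t) \<and> (\<forall>i<n. \<forall>t\<in>{0..<tB}. lam' i t = lam i t))"
  shows "filterlim (\<lambda>t. integral {0..t} rho) at_top (at_left tB)"
proof -
  note n2 = assms(1) and k0 = assms(2) and cb0 = assms(3) and r0 = assms(4) and tB0 = assms(6)
  have n0: "n > 0" using n2 by simp
  have rho_0: "rho 0 = rho0" and lam_0: "\<And>i. i < n \<Longrightarrow> lam i 0 = l0 i"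
    and dlam: "\<And>i t. i < n \<Longrightarrow> t \<in> {0..<tB} \<Longrightarrow>
       (lam i has_real_derivative (- ((lam i t) ^ 2) + k / real n * (rho t - cb))) (at t within {0..<tB})"
    and drho: "\<And>t. t \<in> {0..<tB} \<Longrightarrow>
       (rho has_real_derivative (- rho t * (\<Sum>i<n. lam i t))) (at t within {0..<tB})"
    using sol unfolding is_solution_def by auto
  have sub: "{a..b} \<subseteq> {0..<tB}" if "0 \<le> a" "b < tB" for a b using that by auto
  have dlam': "(lam i has_real_derivative (- ((lam i t) ^ 2) + k / real n * (rho t - cb))) (at t within {a..b})"
    if "i < n" "0 \<le> a" "b < tB" "t \<in> {a..b}" for i t a b
    by (rule DERIV_subset[OF dlam sub]) (use that in auto)
  have drho': "(rho has_real_derivative (- rho t * (\<Sum>i<n. lam i t))) (at t within {a..b})"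
    if "0 \<le> a" "b < tB" "t \<in> {a..b}" for t a b
    by (rule DERIV_subset[OF drho sub]) (use that in auto)
  have clam: "continuous_on {0..<tB} (lam i)" if "i < n" for i
    by (rule DERIV_continuous_on[OF dlam[OF that]])
  have crho: "continuous_on {0..<tB} rho"
    by (rule DERIV_continuous_on[OF drho])
  define Fi where "Fi t = integral {0..t} rho" for t
  define E where "E i t = integral {0..t} (lam i)" for i t
  define S where "S t = (\<Sum>i<n. E i t)" for t
  have dE: "(E i has_real_derivative lam i t) (at t within {a..b})"
    if "i < n" "0 \<le> a" "b < tB" "t \<in> {a..b}" for i t a b
    unfolding E_def by (rule int_deriv[OF clam[OF that(1)]]) (use that in auto)
  have dF: "(Fi has_real_derivative rho t) (at t within {a..b})"
    if "0 \<le> a" "b < tB" "t \<in> {a..b}" for t a b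
    unfolding Fi_def by (rule int_deriv[OF crho]) (use that in auto)
  have dS: "(S has_real_derivative (\<Sum>i<n. lam i t)) (at t within {a..b})"
    if "0 \<le> a" "b < tB" "t \<in> {a..b}" for t a b
    unfolding S_def by (rule DERIV_sum) (rule dE, use that in auto)
  have E0: "E i 0 = 0" for i by (simp add: E_def)
  have S0: "S 0 = 0" by (simp add: S_def E0)
  have F0: "Fi 0 = 0" by (simp add: Fi_def)
  have rho_form: "rho t = rho0 * exp (- S t)" if t: "t \<in> {0..<tB}" for t
  proof -
    define h where "h s = rho s * exp (S s)" for s
    have dh: "(h has_real_derivative 0) (at s within {0..t})" if "s \<in> {0..t}" for s
    proof -
      have d1: "(rho has_real_derivative (- rho s * (\<Sum>i<n. lam i s))) (at s within {0..t})"
        by (rule drho') (use that t in auto)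
      have d2: "((\<lambda>s. exp (S s)) has_real_derivative exp (S s) * (\<Sum>i<n. lam i s)) (at s within {0..t})"
        by (rule DERIV_chain2[OF DERIV_exp dS]) (use that t in auto)
      show ?thesis unfolding h_def
        by (rule DERIV_cong[OF DERIV_mult'[OF d1 d2]]) (simp add: algebra_simps)
    qed
    have "h 0 \<le> h t" by (rule mono_within[of 0 t h "\<lambda>_. 0"]) (use t dh in auto)
    moreover have "h t \<le> h 0"
      using mono_within[of 0 t "\<lambda>s. - h s" "\<lambda>_. 0"] t dh DERIV_minus by fastforce
    ultimately have "h t = rho0" by (simp add: h_def S0 rho_0)
    then show ?thesis by (simp add: h_def exp_minus field_simps)
  qed
  have rho_pos: "rho t > 0" if "t \<in> {0..<tB}" for t using rho_form[OF that] r0 by simp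
  have F_mono: "Fi s \<le> Fi t" if "0 \<le> s" "s \<le> t" "t < tB" for s t
  proof (rule mono_within[of s t Fi rho])
    show "s \<le> t" using that by simp
    fix x assume x: "x \<in> {s..t}"
    show "(Fi has_real_derivative rho x) (at x within {s..t})" by (rule dF) (use that x in auto)
    have "x \<in> {0..<tB}" using that x by auto
    then show "0 \<le> rho x" using rho_pos less_imp_le by blast
  qed
  have main: "\<exists>t0\<in>{0..<tB}. Z \<le> Fi t0" for Z
  proof (rule ccontr)
    assume "\<not> ?thesis"
    then have bnd: "\<And>t. t \<in> {0..<tB} \<Longrightarrow> Fi t < Z" by force

    define c where "c = k / real n"
    have c0: "c > 0" using k0 n0 by (simp add: c_def)
    have dl: "(lam i has_real_derivative (- ((lam i t) ^ 2) + c * (rho t - cb))) (at t within {a..b})"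
      if "i < n" "0 \<le> a" "b < tB" "t \<in> {a..b}" for i t a b
      using dlam'[OF that] by (simp add: c_def)
    have Z0: "Z > 0" using bnd[of 0] tB0 F0 by simp
    define SL where "SL = (\<Sum>i<n. \<bar>l0 i\<bar>)"
    have l0SL: "\<bar>l0 i\<bar> \<le> SL" if "i < n" for i
      unfolding SL_def using that by (intro member_le_sum) auto
    have SL0: "SL \<ge> 0" unfolding SL_def by (intro sum_nonneg) auto
    have Fi_le: "Fi t \<le> Z" if "t \<in> {0..<tB}" for t using bnd[OF that] by simp
    have Fi_ge: "Fi t \<ge> 0" if "t \<in> {0..<tB}" for t using F_mono[of 0 t] that F0 by simp
    define A where "A = SL + c * Z"
    have A0: "A \<ge> 0" using SL0 c0 Z0 by (simp add: A_def)
    have lam_up: "lam i t \<le> A" if i: "i < n" and t: "t \<in> {0..<tB}" for i t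
    proof -
      have "c * Fi 0 - lam i 0 \<le> c * Fi t - lam i t"
      proof (rule mono_within[of 0 t "\<lambda>s. c * Fi s - lam i s"
            "\<lambda>s. c * rho s - (- ((lam i s) ^ 2) + c * (rho s - cb))"])
        show "0 \<le> t" using t by simp
        fix s assume s: "s \<in> {0..t}"
        show "((\<lambda>s. c * Fi s - lam i s) has_real_derivative
            c * rho s - (- ((lam i s) ^ 2) + c * (rho s - cb))) (at s within {0..t})"
          by (intro DERIV_diff DERIV_cmult dF dl) (use i t s in auto)
        have eq: "c * rho s - (- ((lam i s) ^ 2) + c * (rho s - cb)) = (lam i s)^2 + c * cb"
          by (simp add: algebra_simps)
        have "0 \<le> (lam i s)^2 + c * cb" using c0 cb0 by (intro add_nonneg_nonneg) auto
        then show "0 \<le> c * rho s - (- ((lam i s) ^ 2) + c * (rho s - cb))"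
          by (simp only: eq)
      qed
      then have "lam i t \<le> l0 i + c * Fi t" using lam_0[OF i] F0 by simp
      also have "\<dots> \<le> A"
      proof -
        have "l0 i \<le> SL" using l0SL[OF i] by simp
        moreover have "c * Fi t \<le> c * Z" using Fi_le[OF t] c0 by simp
        ultimately show ?thesis by (simp add: A_def)
      qed
      finally show ?thesis .
    qed
    have E_up: "E i t \<le> A * tB" if i: "i < n" and t: "t \<in> {0..<tB}" for i t
    proof -
      have "A * 0 - E i 0 \<le> A * t - E i t"
      proof (rule mono_within[of 0 t "\<lambda>s. A * s - E i s" "\<lambda>s. A * 1 - lam i s"])
        show "0 \<le> t" using t by simp
        fix s assume s: "s \<in> {0..t}"
        show "((\<lambda>s. A * s - E i s) has_real_derivative A * 1 - lam i s) (at s within {0..t})"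
          by (intro DERIV_diff DERIV_cmult DERIV_ident dE) (use i t s in auto)
        show "0 \<le> A * 1 - lam i s" using lam_up[OF i, of s] s t by simp
      qed
      then have "E i t \<le> A * t" using E0 by simp
      also have "\<dots> \<le> A * tB" using t A0 by (intro mult_left_mono) auto
      finally show ?thesis .
    qed
    define U where "U = exp (A * tB)"
    have U1: "U \<ge> 1" using A0 tB0 by (simp add: U_def)
    have expE_U: "exp (E i t) \<le> U" if "i < n" "t \<in> {0..<tB}" for i t
      using E_up[OF that] by (simp add: U_def)
    define w where "w i t = lam i t * exp (E i t)" for i t
    have dexpE: "((\<lambda>s. exp (E i s)) has_real_derivative exp (E i t) * lam i t) (at t within {a..b})"
      if "i < n" "0 \<le> a" "b < tB" "t \<in> {a..b}" for i t a b
      by (rule DERIV_chain2[OF DERIV_exp dE[OF that]])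
    have dw: "(w i has_real_derivative c * (rho t - cb) * exp (E i t)) (at t within {a..b})"
      if "i < n" "0 \<le> a" "b < tB" "t \<in> {a..b}" for i t a b
      unfolding w_def
      by (rule DERIV_cong[OF DERIV_mult'[OF dl[OF that] dexpE[OF that]]])
        (simp add: algebra_simps power2_eq_square)
    have w0: "w i 0 = l0 i" if "i < n" for i using lam_0[OF that] by (simp add: w_def E0)
    have w_up: "w i t \<le> SL + U * c * Z" if i: "i < n" and t: "t \<in> {0..<tB}" for i t
    proof -
      have "U * c * Fi 0 - w i 0 \<le> U * c * Fi t - w i t"
      proof (rule mono_within[of 0 t "\<lambda>s. U * c * Fi s - w i s"
            "\<lambda>s. U * c * rho s - c * (rho s - cb) * exp (E i s)"])
        show "0 \<le> t" using t by simp
        fix s assume s: "s \<in> {0..t}"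
        show "((\<lambda>s. U * c * Fi s - w i s) has_real_derivative
            U * c * rho s - c * (rho s - cb) * exp (E i s)) (at s within {0..t})"
          by (intro DERIV_diff DERIV_cmult dF dw) (use i t s in auto)
        have st: "s \<in> {0..<tB}" using s t by auto
        have "c * (rho s - cb) * exp (E i s) \<le> c * rho s * exp (E i s)"
          using c0 cb0 by (simp add: algebra_simps)
        also have "\<dots> \<le> c * rho s * U"
          using expE_U[OF i st] c0 rho_pos[OF st] by (intro mult_left_mono) auto
        finally show "0 \<le> U * c * rho s - c * (rho s - cb) * exp (E i s)"
          by (simp add: algebra_simps)
      qed
      then have "w i t \<le> l0 i + U * c * Fi t" using w0[OF i] F0 by simp
      also have "\<dots> \<le> SL + U * c * Z"
        using l0SL[OF i] Fi_le[OF t] U1 c0 by (intro add_mono mult_left_mono) auto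
      finally show ?thesis .
    qed
    have w_lo: "w i t \<ge> - SL - U * c * cb * tB" if i: "i < n" and t: "t \<in> {0..<tB}" for i t
    proof -
      have "w i 0 + U * c * cb * 0 \<le> w i t + U * c * cb * t"
      proof (rule mono_within[of 0 t "\<lambda>s. w i s + U * c * cb * s"
            "\<lambda>s. c * (rho s - cb) * exp (E i s) + U * c * cb * 1"])
        show "0 \<le> t" using t by simp
        fix s assume s: "s \<in> {0..t}"
        show "((\<lambda>s. w i s + U * c * cb * s) has_real_derivative
            c * (rho s - cb) * exp (E i s) + U * c * cb * 1) (at s within {0..t})"
          by (intro DERIV_add DERIV_cmult DERIV_ident dw) (use i t s in auto)
        have st: "s \<in> {0..<tB}" using s t by auto
        have "c * cb * exp (E i s) \<le> c * cb * U"
          using expE_U[OF i st] c0 cb0 by (intro mult_left_mono) auto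
        moreover have "c * rho s * exp (E i s) \<ge> 0" using c0 rho_pos[OF st] by simp
        ultimately show "0 \<le> c * (rho s - cb) * exp (E i s) + U * c * cb * 1"
          by (simp add: algebra_simps)
      qed
      then have "w i t \<ge> l0 i - U * c * cb * t" using w0[OF i] by simp
      moreover have "U * c * cb * t \<le> U * c * cb * tB"
        using t U1 c0 cb0 by (intro mult_left_mono) auto
      ultimately show ?thesis using l0SL[OF i] by simp
    qed
    define B where "B = 1 + SL + U * c * (Z + cb * tB)"
    have B1: "B \<ge> 1" using SL0 U1 c0 Z0 cb0 tB0 by (simp add: B_def)
    have w_bd: "\<bar>w i t\<bar> \<le> B" if "i < n" "t \<in> {0..<tB}" for i t
    proof -
      have p1: "U * c * Z \<ge> 0" using U1 c0 Z0 by simp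
      have p2: "U * c * cb * tB \<ge> 0" using U1 c0 cb0 tB0 by simp
      have Bq: "B = 1 + SL + U * c * Z + U * c * cb * tB" by (simp add: B_def algebra_simps)
      show ?thesis using w_up[OF that] w_lo[OF that] p1 p2 Bq by (simp only: abs_le_iff) linarith
    qed
    have u_mono: "exp (E i s) + B * s \<le> exp (E i t) + B * t"
      if i: "i < n" and st: "0 \<le> s" "s \<le> t" "t < tB" for i s t
    proof (rule mono_within[of s t "\<lambda>s. exp (E i s) + B * s" "\<lambda>s. exp (E i s) * lam i s + B * 1"])
      show "s \<le> t" using st by simp
      fix x assume x: "x \<in> {s..t}"
      show "((\<lambda>s. exp (E i s) + B * s) has_real_derivative exp (E i x) * lam i x + B * 1) (at x within {s..t})"
        by (intro DERIV_add DERIV_cmult DERIV_ident dexpE) (use i st x in auto)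
      have "x \<in> {0..<tB}" using st x by auto
      then have "\<bar>w i x\<bar> \<le> B" by (rule w_bd[OF i])
      then show "0 \<le> exp (E i x) * lam i x + B * 1" by (simp add: w_def algebra_simps)
    qed
    define C0 where "C0 = rho0 * exp (- (real n * (A * tB)))"
    have C00: "C0 > 0" using r0 by (simp add: C0_def)
    have rho_lo: "rho s \<ge> C0 * exp (- E i s)" if i: "i < n" and s: "s \<in> {0..<tB}" for i s
    proof -
      have "S s = E i s + (\<Sum>j\<in>{..<n} - {i}. E j s)"
        unfolding S_def using i by (simp add: sum.remove)
      also have "(\<Sum>j\<in>{..<n} - {i}. E j s) \<le> (\<Sum>j\<in>{..<n} - {i}. A * tB)"
        by (intro sum_mono E_up s) auto
      also have "\<dots> \<le> (\<Sum>j\<in>{..<n}. A * tB)"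
        using A0 tB0 by (intro sum_mono2) auto
      finally have "S s \<le> E i s + real n * (A * tB)" by simp
      then have "exp (- E i s - real n * (A * tB)) \<le> exp (- S s)" by simp
      then have "rho0 * exp (- E i s - real n * (A * tB)) \<le> rho0 * exp (- S s)"
        using r0 by simp
      moreover have "rho0 * exp (- E i s - real n * (A * tB)) = C0 * exp (- E i s)"
        by (simp add: C0_def exp_diff exp_minus field_simps)
      ultimately show ?thesis using rho_form[OF s] by simp
    qed

    have key: "(C0 / B) * (ln (exp (E i t) + B * t) - ln (exp (E i t))) \<le> Fi t"
      if i: "i < n" and t: "t \<in> {0..<tB}" for i t
    proof -
      define u where "u = exp (E i t)"
      have u0: "u > 0" by (simp add: u_def)
      define q where "q s = u + B * (t - s)" for s
      have q_pos: "q s \<ge> u" if "s \<le> t" for s using that B1 by (simp add: q_def)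
      define G where "G s = - (C0 / B) * ln (q s)" for s
      have "Fi 0 - G 0 \<le> Fi t - G t"
      proof (rule mono_within[of 0 t "\<lambda>s. Fi s - G s" "\<lambda>s. rho s - C0 / q s"])
        show "0 \<le> t" using t by simp
        fix s assume s: "s \<in> {0..t}"
        have qs: "q s > 0" using q_pos[of s] s u0 by auto
        have dq: "(q has_real_derivative - B) (at s within {0..t})"
          unfolding q_def by (auto intro!: derivative_eq_intros)
        have dG: "(G has_real_derivative C0 / q s) (at s within {0..t})"
          unfolding G_def
          by (rule DERIV_cong[OF DERIV_cmult[OF DERIV_chain2[OF DERIV_ln[OF qs] dq]]])
            (use B1 qs in \<open>simp add: field_simps\<close>)
        show "((\<lambda>s. Fi s - G s) has_real_derivative rho s - C0 / q s) (at s within {0..t})"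
          by (rule DERIV_diff[OF dF dG]) (use s t in auto)
        have st: "s \<in> {0..<tB}" using s t by auto
        have "exp (E i s) + B * s \<le> exp (E i t) + B * t" by (rule u_mono[OF i]) (use s t in auto)
        then have "exp (E i s) \<le> q s" by (simp add: q_def u_def algebra_simps)
        then have "C0 / q s \<le> C0 / exp (E i s)" using C00 qs by (intro divide_left_mono) auto
        also have "\<dots> = C0 * exp (- E i s)" by (simp add: exp_minus field_simps)
        also have "\<dots> \<le> rho s" by (rule rho_lo[OF i st])
        finally show "0 \<le> rho s - C0 / q s" by simp
      qed
      then have "G t - G 0 \<le> Fi t" using F0 by simp
      moreover have "G t - G 0 = (C0 / B) * (ln (u + B * t) - ln u)"
        by (simp add: G_def q_def algebra_simps)
      ultimately show ?thesis by (simp add: u_def)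
    qed
    define W where "W = Z * B / C0"
    define Q where "Q = exp W"
    have W0: "W > 0" using Z0 B1 C00 by (simp add: W_def)
    have Q1: "Q > 1" using W0 by (simp add: Q_def)
    have u_lo1: "B * t < (Q - 1) * exp (E i t)" if i: "i < n" and t: "t \<in> {0..<tB}" for i t
    proof -
      define u where "u = exp (E i t)"
      have u0: "u > 0" by (simp add: u_def)
      have Bt: "B * t \<ge> 0" using B1 t by simp
      have "(C0 / B) * (ln (u + B*t) - ln u) < Z" using key[OF i t] bnd[OF t] by (simp add: u_def)
      then have "(B / C0) * ((C0 / B) * (ln (u + B*t) - ln u)) < (B / C0) * Z"
        using B1 C00 by (intro mult_strict_left_mono) auto
      moreover have "(B / C0) * ((C0 / B) * (ln (u + B*t) - ln u)) = ln (u + B*t) - ln u"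
        using B1 C00 by simp
      moreover have "(B / C0) * Z = W" by (simp add: W_def)
      ultimately have lt: "ln (u + B*t) - ln u < W" by simp
      have pos: "(u + B*t) / u > 0" using u0 Bt by simp
      have "ln ((u + B*t) / u) < W" using lt u0 Bt by (simp add: ln_div)
      then have "exp (ln ((u + B*t) / u)) < Q" unfolding Q_def by simp
      then have "(u + B*t) / u < Q" using pos by simp
      then have "u + B*t < Q * u" using u0 by (simp add: divide_less_eq)
      then show ?thesis by (simp add: u_def algebra_simps)
    qed
    define m where "m = min (1/2) (1 / (2 * (Q - 1)))"
    have m0: "m > 0" using Q1 by (simp add: m_def)
    have exp_lo: "exp (E i t) \<ge> m" if i: "i < n" and t: "t \<in> {0..<tB}" for i t
    proof (cases "B * t \<le> 1/2")
      case True
      have "exp (E i 0) + B * 0 \<le> exp (E i t) + B * t" by (rule u_mono[OF i]) (use t in auto)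
      then have "exp (E i t) \<ge> 1/2" using True by (simp add: E0)
      then show ?thesis by (simp add: m_def)
    next
      case False
      have "1/2 < (Q - 1) * exp (E i t)" using u_lo1[OF i t] False by simp
      then have "1 / (2 * (Q - 1)) < exp (E i t)" using Q1 by (simp add: field_simps)
      then show ?thesis by (simp add: m_def)
    qed
    have E_lo: "E i t \<ge> ln m" if i: "i < n" and t: "t \<in> {0..<tB}" for i t
      using exp_lo[OF i t] m0 by (metis ln_exp ln_le_cancel_iff exp_gt_zero)
    define Rm where "Rm = rho0 * exp (- (real n * ln m))"
    have Rm0: "Rm \<ge> 0" using r0 by (simp add: Rm_def)
    define M where "M = B / m + Rm + 1"
    have M1: "M \<ge> 1" using B1 m0 Rm0 by (simp add: M_def)
    have lam_bd: "\<bar>lam i t\<bar> \<le> M" if i: "i < n" and t: "t \<in> {0..<tB}" for i t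
    proof -
      have "\<bar>lam i t\<bar> = \<bar>w i t\<bar> / exp (E i t)" by (simp add: w_def abs_mult)
      also have "\<dots> \<le> B / exp (E i t)" using w_bd[OF i t] by (simp add: divide_right_mono)
      also have "\<dots> \<le> B / m" using exp_lo[OF i t] m0 B1 by (intro divide_left_mono) auto
      also have "\<dots> \<le> M" using Rm0 by (simp add: M_def)
      finally show ?thesis .
    qed
    have rho_bd: "\<bar>rho t\<bar> \<le> M" if t: "t \<in> {0..<tB}" for t
    proof -
      have "(\<Sum>i<n. ln m) \<le> S t" unfolding S_def by (intro sum_mono E_lo t) auto
      then have "real n * ln m \<le> S t" by simp
      then have "exp (- S t) \<le> exp (- (real n * ln m))" by simp
      then have "rho t \<le> Rm" using rho_form[OF t] r0 by (simp add: Rm_def)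
      moreover have "B / m \<ge> 0" using B1 m0 by simp
      ultimately show ?thesis using rho_pos[OF t] by (simp add: M_def)
    qed

    define D where "D = M^2 + c * (M + cb) + real n * M^2"
    have D0: "D \<ge> 0" using c0 cb0 M1 by (simp add: D_def)
    have lipl: "D-lipschitz_on {0..<tB} (lam i)" if i: "i < n" for i
    proof (rule lip_from_deriv[OF D0 dl[OF i]])
      fix t assume t: "t \<in> {0..<tB}"
      have "\<bar>- ((lam i t) ^ 2) + c * (rho t - cb)\<bar> \<le> \<bar>lam i t\<bar>^2 + c * \<bar>rho t - cb\<bar>"
        using c0 by (rule_tac order_trans[OF abs_triangle_ineq]) (simp add: abs_mult)
      also have "\<bar>rho t - cb\<bar> \<le> M + cb" using rho_bd[OF t] cb0 by (simp add: abs_le_iff)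
      also have "\<bar>lam i t\<bar>^2 \<le> M^2" using lam_bd[OF i t] by (intro power_mono) auto
      finally have "\<bar>- ((lam i t) ^ 2) + c * (rho t - cb)\<bar> \<le> M^2 + c * (M + cb)"
        using c0 by (simp add: mult_left_mono)
      also have "\<dots> \<le> D" using M1 by (simp add: D_def)
      finally show "\<bar>- ((lam i t) ^ 2) + c * (rho t - cb)\<bar> \<le> D" .
    qed auto
    have lipr: "D-lipschitz_on {0..<tB} rho"
    proof (rule lip_from_deriv[OF D0 drho'])
      fix t assume t: "t \<in> {0..<tB}"
      have "\<bar>\<Sum>i<n. lam i t\<bar> \<le> (\<Sum>i<n. \<bar>lam i t\<bar>)" by (rule sum_abs)
      also have "\<dots> \<le> (\<Sum>i<n. M)" by (intro sum_mono lam_bd t) auto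
      finally have sb: "\<bar>\<Sum>i<n. lam i t\<bar> \<le> real n * M" by simp
      have "\<bar>- rho t * (\<Sum>i<n. lam i t)\<bar> = \<bar>rho t\<bar> * \<bar>\<Sum>i<n. lam i t\<bar>" by (simp add: abs_mult)
      also have "\<dots> \<le> M * (real n * M)" using rho_bd[OF t] sb M1 by (intro mult_mono) auto
      also have "\<dots> \<le> D" using c0 cb0 M1 by (simp add: D_def power2_eq_square)
      finally show "\<bar>- rho t * (\<Sum>i<n. lam i t)\<bar> \<le> D" .
    qed auto
    have clo: "closure {0..<tB} = {0..tB}" using tB0 by simp
    have "\<forall>i. \<exists>g. i < n \<longrightarrow> (D-lipschitz_on {0..tB} g \<and> (\<forall>x\<in>{0..<tB}. g x = lam i x))"
      using lipschitz_extend_closure[OF lipl] clo by metis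
    then obtain gl where gl: "\<And>i. i < n \<Longrightarrow> D-lipschitz_on {0..tB} (gl i)"
      "\<And>i x. i < n \<Longrightarrow> x \<in> {0..<tB} \<Longrightarrow> gl i x = lam i x" by metis
    obtain gr where gr: "D-lipschitz_on {0..tB} gr" "\<And>x. x \<in> {0..<tB} \<Longrightarrow> gr x = rho x"
      using lipschitz_extend_closure[OF lipr] clo by metis
    have cgl: "continuous_on {0..tB} (gl i)" if "i < n" for i
      using gl(1)[OF that] by (rule lipschitz_on_continuous_on)
    have cgr: "continuous_on {0..tB} gr" using gr(1) by (rule lipschitz_on_continuous_on)
    obtain \<delta> y where \<delta>0: "\<delta> > 0" and yc: "\<And>j. continuous_on {tB..tB+\<delta>} (y j)"
      and yl: "\<And>i t. i < n \<Longrightarrow> t \<in> {tB..tB+\<delta>} \<Longrightarrow>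
         y i t = gl i tB + integral {tB..t} (\<lambda>s. -((y i s)^2) + k / real n * (y n s - cb))"
      and yr: "\<And>t. t \<in> {tB..tB+\<delta>} \<Longrightarrow> y n t = gr tB + integral {tB..t} (\<lambda>s. - y n s * (\<Sum>i<n. y i s))"
      using local_exist[where a="\<lambda>i. gl i tB" and r="gr tB" and k=k and cb=cb and ta=tB and n=n]
      by blast
    have ylB: "y i tB = gl i tB" if "i < n" for i using yl[OF that, of tB] \<delta>0 by simp
    have yrB: "y n tB = gr tB" using yr[of tB] \<delta>0 by simp
    define T2 where "T2 = tB + \<delta>"
    have T2B: "T2 > tB" using \<delta>0 by (simp add: T2_def)
    define H where "H i = (\<lambda>t. if t \<le> tB then gl i t else y i t)" for i
    define Hr where "Hr = (\<lambda>t. if t \<le> tB then gr t else y n t)"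
    have cH: "continuous_on {0..T2} (H i)" if "i < n" for i
      unfolding H_def T2_def by (rule glue_cont[OF cgl[OF that] yc ylB[OF that, symmetric]])
    have cHr: "continuous_on {0..T2} Hr"
      unfolding Hr_def T2_def by (rule glue_cont[OF cgr yc yrB[symmetric]])
    have HL: "H i t = lam i t" if "i < n" "t \<in> {0..<tB}" for i t
      using that gl(2) by (simp add: H_def)
    have HrL: "Hr t = rho t" if "t \<in> {0..<tB}" for t
      using that gr(2) by (simp add: Hr_def)
    have Hy: "H i t = y i t" if "i < n" "t \<in> {tB..T2}" for i t
      using that ylB by (cases "t \<le> tB") (auto simp: H_def)
    have Hry: "Hr t = y n t" if "t \<in> {tB..T2}" for t
      using that yrB by (cases "t \<le> tB") (auto simp: Hr_def)
    define Gl where "Gl i s = -((H i s)^2) + k / real n * (Hr s - cb)" for i s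
    define Gr where "Gr s = - Hr s * (\<Sum>i<n. H i s)" for s
    have cGl: "continuous_on {0..T2} (Gl i)" if "i < n" for i
      unfolding Gl_def by (intro continuous_intros cH cHr that)
    have cGr: "continuous_on {0..T2} Gr"
      unfolding Gr_def by (auto intro!: continuous_intros cH cHr)
    have solH: "is_solution n k cb rho0 l0 T2 H Hr"
      unfolding is_solution_def
    proof (intro conjI allI impI ballI)
      show "0 < T2" using T2B tB0 by simp
      show "Hr 0 = rho0" using HrL[of 0] tB0 rho_0 by simp
      show "H i 0 = l0 i" if "i < n" for i using HL[OF that, of 0] tB0 lam_0[OF that] by simp
      fix t assume t: "t \<in> {0..<T2}"
      {
        fix i assume i: "i < n"
        have "(H i has_real_derivative Gl i t) (at t within {0..<T2})"
          unfolding H_def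
        proof (rule glue[of tB T2 "gl i" "y i" "Gl i" t, OF tB0 T2B cgl[OF i] ylB[OF i, symmetric] cGl[OF i] _ _ t])
          fix s assume s: "s \<in> {0..<tB}"
          have "(lam i has_real_derivative Gl i s) (at s within {0..<tB})"
            using dlam[OF i s] HL[OF i s] HrL[OF s] by (simp add: Gl_def)
          then show "(gl i has_real_derivative Gl i s) (at s within {0..<tB})"
            by (rule has_field_derivative_transform_within[OF _ zero_less_one s])
              (use gl(2)[OF i] in auto)
        next
          fix s assume s: "s \<in> {tB..T2}"
          have "y i s = gl i tB + integral {tB..s} (\<lambda>s. -((y i s)^2) + k / real n * (y n s - cb))"
            using yl[OF i] s by (simp add: T2_def)
          also have "integral {tB..s} (\<lambda>s. -((y i s)^2) + k / real n * (y n s - cb)) = integral {tB..s} (Gl i)"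
            by (rule integral_cong) (use s Hy[OF i] Hry in \<open>auto simp: Gl_def\<close>)
          finally show "y i s = y i tB + integral {tB..s} (Gl i)" using ylB[OF i] by simp
        qed
        then show "(H i has_real_derivative (- ((H i t) ^ 2) + k / real n * (Hr t - cb))) (at t within {0..<T2})"
          by (simp add: Gl_def)
      }
      have "(Hr has_real_derivative Gr t) (at t within {0..<T2})"
        unfolding Hr_def
      proof (rule glue[of tB T2 gr "y n" Gr t, OF tB0 T2B cgr yrB[symmetric] cGr _ _ t])
        fix s assume s: "s \<in> {0..<tB}"
        have "(rho has_real_derivative Gr s) (at s within {0..<tB})"
          using drho[OF s] HL[OF _ s] HrL[OF s] by (simp add: Gr_def)
        then show "(gr has_real_derivative Gr s) (at s within {0..<tB})"
          by (rule has_field_derivative_transform_within[OF _ zero_less_one s])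
            (use gr(2) in auto)
      next
        fix s assume s: "s \<in> {tB..T2}"
        have "y n s = gr tB + integral {tB..s} (\<lambda>s. - y n s * (\<Sum>i<n. y i s))"
          using yr s by (simp add: T2_def)
        also have "integral {tB..s} (\<lambda>s. - y n s * (\<Sum>i<n. y i s)) = integral {tB..s} Gr"
          by (rule integral_cong) (use s Hy Hry in \<open>auto simp: Gr_def\<close>)
        finally show "y n s = y n tB + integral {tB..s} Gr" using yrB by simp
      qed
      then show "(Hr has_real_derivative (- Hr t * (\<Sum>i<n. H i t))) (at t within {0..<T2})"
        by (simp add: Gr_def)
    qed
    have agree: "(\<forall>t\<in>{0..<tB}. Hr t = rho t) \<and> (\<forall>i<n. \<forall>t\<in>{0..<tB}. H i t = lam i t)"
      using HL HrL by auto
    show False using maximal[OF T2B solH] agree by blast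
  qed
  show ?thesis
    unfolding filterlim_at_top
  proof
    fix Z
    obtain t0 where t0: "t0 \<in> {0..<tB}" "Z \<le> Fi t0" using main by blast
    have "eventually (\<lambda>x. x \<in> {t0<..<tB}) (at_left tB)"
      by (rule eventually_at_left_real) (use t0 in auto)
    then show "eventually (\<lambda>x. Z \<le> integral {0..x} rho) (at_left tB)"
    proof (rule eventually_mono)
      fix x assume "x \<in> {t0<..<tB}"
      then have "Fi t0 \<le> Fi x" using t0 by (intro F_mono) auto
      then show "Z \<le> integral {0..x} rho" using t0 by (simp add: Fi_def)
    qed
  qed
qed

end
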